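(* Let $F \subseteq \mathbb{H}$ intersect every wedge in $\mathbb{H}$. Then there is $u \in \mathbb{S}^+$ such that $T_u(F)$ is dense in $\mathbb{R}$.
   Context: $\mathbb{H} = \{(x,y) \in \mathbb{R}^2 : y > 0\}$, $\mathbb{S}$ is the unit circle in $\mathbb{R}^2$, and $\mathbb{S}^+ = \mathbb{S} \cap \mathbb{H}$. For $u = (u_1,u_2) \in \mathbb{S}$, $T_u : \mathbb{R}^2 \to \mathbb{R}$ is the orthogonal projection parallel to $u$, i.e. $T_u(x) = \langle x,(u_2,-u_1)\rangle$, so $T_u(x) = T_u(y)$ iff $x-y \in \mathbb{R}u$. A wedge in $\mathbb{H}$ is a set of the form $\{tv : t > s, v \in \mathbb{S}, \|v-u\| < \varepsilon\}$ for some $u \in \mathbb{S}^+$ and $s,\varepsilon > 0$, which is contained in $\mathbb{H}$. *)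

theory Defs
  imports "HOL-Analysis.Analysis"
begin

definition upper_half :: "(real \<times> real) set" where
  "upper_half = {p. snd p > 0}"

definition circ :: "(real \<times> real) set" where
  "circ = sphere 0 1"

definition circ_plus :: "(real \<times> real) set" where
  "circ_plus = circ \<inter> upper_half"

text \<open>Projection parallel to u: T_u(x) = <x, (u2, -u1)>.\<close>
definition proj_par :: "real \<times> real \<Rightarrow> real \<times> real \<Rightarrow> real" where
  "proj_par u x = x \<bullet> (snd u, - fst u)"

definition is_wedge :: "(real \<times> real) set \<Rightarrow> bool" where
  "is_wedge W \<longleftrightarrow> (\<exists>u s \<epsilon>. u \<in> circ_plus \<and> s > 0 \<and> \<epsilon> > 0 \<and>
      W = {t *\<^sub>R v | t v. t > s \<and> v \<in> circ \<and> norm (v - u) < \<epsilon>}) \<and> W \<subseteq> upper_half"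

end

theory Submission
  imports Defs
begin
lemma cs: fixes p q th :: real shows "\<bar>p * sin th - q * cos th\<bar> \<le> norm (p, q)"
proof -
  have "\<bar>(p,q) \<bullet> (sin th, - cos th)\<bar> \<le> norm (p,q) * norm (sin th, - cos th)"
    by (rule Cauchy_Schwarz_ineq2)
  moreover have "norm (sin th, - cos th) = 1" by (simp add: norm_Pair)
  ultimately show ?thesis by (simp add: inner_Pair)
qed

lemma l1: "(h::real) \<le> - T / 2 \<Longrightarrow> 2 * K < T \<Longrightarrow> h < - K" by linarith
lemma l2: "(h::real) \<ge> T / 2 \<Longrightarrow> 2 * K < T \<Longrightarrow> h > K" by linarith

lemma key:
  fixes F :: "(real \<times> real) set"
  assumes wed: "\<And>W. is_wedge W \<Longrightarrow> F \<inter> W \<noteq> {}"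
    and ab: "\<alpha> < \<beta>" "pi/4 \<le> \<alpha>" "\<beta> \<le> 3*pi/4" and qr: "q < r"
  shows "\<exists>\<theta>\<in>{\<alpha>..\<beta>}. \<exists>x\<in>F. q < fst x * sin \<theta> - snd x * cos \<theta> \<and> fst x * sin \<theta> - snd x * cos \<theta> < r"
proof -
  define d where "d = (\<beta> - \<alpha>)/2"
  define \<gamma> where "\<gamma> = (\<alpha> + \<beta>)/2"
  define w where "w = (cos \<gamma>, sin \<gamma>)"
  have d0: "0 < d" "d < pi" using ab pi_gt3 unfolding d_def by auto
  have sd: "sin d > 0" using d0 sin_gt_zero by blast
  have g0: "0 < \<gamma>" "\<gamma> < pi" using ab pi_gt3 unfolding \<gamma>_def by auto
  have sg: "sin \<gamma> > 0" using g0 sin_gt_zero by blast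
  define \<delta> where "\<delta> = min (sin d) (sin \<gamma>) / 2"
  have del: "\<delta> > 0" "\<delta> \<le> sin d / 2" "\<delta> < sin \<gamma>" using sd sg unfolding \<delta>_def by auto
  define s where "s = 2 * (\<bar>q\<bar> + \<bar>r\<bar> + 1) / sin d"
  have s0: "s > 0" using sd unfolding s_def by auto
  have ssd: "s * sin d = 2 * (\<bar>q\<bar> + \<bar>r\<bar> + 1)" using sd unfolding s_def by auto
  define W where "W = {t *\<^sub>R v | t v. t > s \<and> v \<in> circ \<and> norm (v - w) < \<delta>}"
  have wc: "w \<in> circ_plus" using sg
    by (simp add: w_def circ_plus_def circ_def upper_half_def norm_Pair)
  have "W \<subseteq> upper_half"
  proof
    fix y assume "y \<in> W"
    then obtain t v where y: "y = t *\<^sub>R v" "t > s" "norm (v - w) < \<delta>" unfolding W_def by auto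
    have "\<bar>snd v - sin \<gamma>\<bar> \<le> norm (v - w)"
    proof -
      obtain p b where v: "v = (p, b)" by fastforce
      have "sqrt ((b - sin \<gamma>)^2) \<le> sqrt ((p - cos \<gamma>)^2 + (b - sin \<gamma>)^2)"
        by (intro real_sqrt_le_mono) simp
      then show ?thesis by (simp add: v w_def norm_Pair)
    qed
    then have "snd v > 0" using y del by linarith
    then show "y \<in> upper_half" using y s0 by (simp add: upper_half_def)
  qed
  then have "is_wedge W" unfolding is_wedge_def using wc s0 del W_def by blast
  then obtain x where x: "x \<in> F" "x \<in> W" using wed by blast
  then obtain t a b where xt: "x = t *\<^sub>R (a, b)" "t > s" "norm ((a,b) - w) < \<delta>"
    unfolding W_def by force
  define h where "h = (\<lambda>\<theta>. fst x * sin \<theta> - snd x * cos \<theta>)"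
  have hx: "h \<theta> = t * (a * sin \<theta> - b * cos \<theta>)" for \<theta>
    by (simp add: h_def xt algebra_simps)
  have nab: "norm (a - cos \<gamma>, b - sin \<gamma>) < \<delta>" using xt by (simp add: w_def)
  have "a * sin \<alpha> - b * cos \<alpha> = (cos \<gamma> * sin \<alpha> - sin \<gamma> * cos \<alpha>) + ((a - cos \<gamma>) * sin \<alpha> - (b - sin \<gamma>) * cos \<alpha>)"
    by (simp add: algebra_simps)
  moreover have "cos \<gamma> * sin \<alpha> - sin \<gamma> * cos \<alpha> = - sin d"
  proof -
    have "cos \<gamma> * sin \<alpha> - sin \<gamma> * cos \<alpha> = sin (\<alpha> - \<gamma>)" by (simp add: sin_diff algebra_simps)
    moreover have "\<alpha> - \<gamma> = - d" by (simp add: d_def \<gamma>_def field_simps)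
    ultimately show ?thesis by simp
  qed
  moreover have "\<bar>(a - cos \<gamma>) * sin \<alpha> - (b - sin \<gamma>) * cos \<alpha>\<bar> < \<delta>"
    using cs[of "a - cos \<gamma>" \<alpha> "b - sin \<gamma>"] nab by linarith
  ultimately have A: "a * sin \<alpha> - b * cos \<alpha> < - sin d / 2" using del by linarith
  have "a * sin \<beta> - b * cos \<beta> = (cos \<gamma> * sin \<beta> - sin \<gamma> * cos \<beta>) + ((a - cos \<gamma>) * sin \<beta> - (b - sin \<gamma>) * cos \<beta>)"
    by (simp add: algebra_simps)
  moreover have "cos \<gamma> * sin \<beta> - sin \<gamma> * cos \<beta> = sin d"
  proof -
    have "cos \<gamma> * sin \<beta> - sin \<gamma> * cos \<beta> = sin (\<beta> - \<gamma>)" by (simp add: sin_diff algebra_simps)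
    moreover have "\<beta> - \<gamma> = d" by (simp add: d_def \<gamma>_def field_simps)
    ultimately show ?thesis by simp
  qed
  moreover have "\<bar>(a - cos \<gamma>) * sin \<beta> - (b - sin \<gamma>) * cos \<beta>\<bar> < \<delta>"
    using cs[of "a - cos \<gamma>" \<beta> "b - sin \<gamma>"] nab by linarith
  ultimately have B: "a * sin \<beta> - b * cos \<beta> > sin d / 2" using del by linarith
  have ts: "t * sin d > 2 * (\<bar>q\<bar> + \<bar>r\<bar> + 1)" using xt sd ssd mult_strict_right_mono[of s t "sin d"] by linarith
  have e1: "t * (- sin d / 2) = - (t * sin d) / 2" "t * (sin d / 2) = (t * sin d) / 2" by simp_all
  have "h \<alpha> < - (\<bar>q\<bar> + \<bar>r\<bar> + 1)"
  proof -
    have "h \<alpha> \<le> t * (- sin d / 2)" unfolding hx using A xt s0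
      by (intro mult_left_mono) auto
    then have "h \<alpha> \<le> - (t * sin d) / 2" by simp
    then show ?thesis using ts by (rule l1)
  qed
  moreover have "h \<beta> > \<bar>q\<bar> + \<bar>r\<bar> + 1"
  proof -
    have "h \<beta> \<ge> t * (sin d / 2)" unfolding hx using B xt s0
      by (intro mult_left_mono) auto
    then have "h \<beta> \<ge> (t * sin d) / 2" by simp
    then show ?thesis using ts by (rule l2)
  qed
  moreover obtain m where m: "m = (q+r)/2" by blast
  moreover have "2 * m = q + r" using m by simp
  ultimately have hab: "h \<alpha> \<le> m" "m \<le> h \<beta>" and qmr: "q < m" "m < r"
    using qr abs_ge_self[of q] abs_ge_self[of r] abs_ge_minus_self[of q] abs_ge_minus_self[of r] abs_ge_zero[of q] abs_ge_zero[of r] by linarith+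
  have c: "continuous_on {\<alpha>..\<beta>} h" unfolding h_def by (intro continuous_intros)
  obtain \<theta> where th: "\<alpha> \<le> \<theta>" "\<theta> \<le> \<beta>" "h \<theta> = m"
    using IVT'[of h \<alpha> m \<beta>, OF hab _ c] ab by auto
  then show ?thesis using x qmr unfolding h_def by auto
qed

lemma proj_eq: "proj_par (cos th, sin th) x = fst x * sin th - snd x * cos th"
  by (cases x) (simp add: proj_par_def inner_Pair)

theorem lemma3p2:
  fixes F :: "(real \<times> real) set"
  assumes "F \<subseteq> upper_half"
    and "\<And>W. is_wedge W \<Longrightarrow> F \<inter> W \<noteq> {}"
  shows "\<exists>u \<in> circ_plus. closure (proj_par u ` F) = UNIV"
proof -
  define S where "S = {pi/4 .. 3*pi/4}"
  define g where "g = (\<lambda>\<theta> (x::real\<times>real). fst x * sin \<theta> - snd x * cos \<theta>)"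
  define TT where "TT = (\<lambda>q r. {\<theta>\<in>S. \<exists>x\<in>F. q < g \<theta> x \<and> g \<theta> x < r})"
  define I where "I = {(q,r). q\<in>\<rat> \<and> r\<in>\<rat> \<and> (q::real) < r}"
  define G where "G = (\<lambda>(q,r). TT q r) ` I"
  have cI: "countable I"
    by (rule countable_subset[of _ "\<rat> \<times> \<rat>"]) (auto simp: I_def countable_rat)
  have "S \<subseteq> closure (\<Inter>G)"
  proof (rule Baire)
    show "closed S" by (simp add: S_def)
    show "countable G" using cI by (simp add: G_def)
  next
    fix T assume "T \<in> G"
    then obtain q r where qr: "q < r" and T: "T = TT q r" by (auto simp: G_def I_def)
    have "openin (top_of_set S) (TT q r)"
      unfolding openin_open
    proof (intro exI conjI)
      show "open (\<Union>x\<in>F. {\<theta>. q < g \<theta> x \<and> g \<theta> x < r})"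
        unfolding g_def by (intro open_UN ballI open_Collect_conj open_Collect_less continuous_intros)
      show "TT q r = S \<inter> (\<Union>x\<in>F. {\<theta>. q < g \<theta> x \<and> g \<theta> x < r})"
        by (auto simp: TT_def)
    qed
    moreover have "S \<subseteq> closure (TT q r)"
    proof
      fix \<theta>0 assume th0: "\<theta>0 \<in> S"
      show "\<theta>0 \<in> closure (TT q r)"
        unfolding closure_approachable
      proof (intro allI impI)
        fix e :: real assume e: "e > 0"
        define \<alpha> where "\<alpha> = max (\<theta>0 - e/2) (pi/4)"
        define \<beta> where "\<beta> = min (\<theta>0 + e/2) (3*pi/4)"
        have p: "pi/4 < 3*pi/4" using pi_gt_zero by simp
        have t0: "pi/4 \<le> \<theta>0" "\<theta>0 \<le> 3*pi/4" using th0 unfolding S_def by auto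
        have "\<alpha> < \<beta>" using t0 p e unfolding \<alpha>_def \<beta>_def by (auto simp: max_def min_def)
        moreover have "pi/4 \<le> \<alpha>" "\<beta> \<le> 3*pi/4" unfolding \<alpha>_def \<beta>_def by (auto simp: max_def min_def)
        ultimately obtain \<theta> x where th: "\<theta> \<in> {\<alpha>..\<beta>}" "x \<in> F" "q < g \<theta> x" "g \<theta> x < r"
          using key[OF assms(2) _ _ _ qr] unfolding g_def by blast
        have "\<theta> \<in> TT q r" using th \<open>pi/4 \<le> \<alpha>\<close> \<open>\<beta> \<le> 3*pi/4\<close> unfolding TT_def S_def by auto
        moreover have "dist \<theta> \<theta>0 < e" using th e unfolding \<alpha>_def \<beta>_def dist_real_def by auto
        ultimately show "\<exists>y\<in>TT q r. dist y \<theta>0 < e" by blast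
      qed
    qed
    ultimately show "openin (top_of_set S) T \<and> S \<subseteq> closure T" using T by simp
  qed
  moreover have "pi/2 \<in> S" using pi_gt_zero by (simp add: S_def)
  ultimately have "\<Inter>G \<noteq> {}" by auto
  then obtain \<theta> where th: "\<theta> \<in> \<Inter>G" by auto
  have "(0,1) \<in> I" by (simp add: I_def)
  then have "TT 0 1 \<in> G" by (force simp: G_def)
  then have "\<theta> \<in> S" using th by (auto simp: TT_def)
  then have "pi/4 \<le> \<theta>" "\<theta> \<le> 3*pi/4" by (auto simp: S_def)
  then have "0 < \<theta>" "\<theta> < pi" using pi_gt_zero by linarith+
  then have "sin \<theta> > 0" using sin_gt_zero by blast
  then have uc: "(cos \<theta>, sin \<theta>) \<in> circ_plus"
    by (simp add: circ_plus_def circ_def upper_half_def norm_Pair)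
  have "closure (proj_par (cos \<theta>, sin \<theta>) ` F) = UNIV"
  proof (rule set_eqI, simp, unfold closure_approachable, intro allI impI)
    fix y e :: real assume e: "e > 0"
    obtain q where q: "q \<in> \<rat>" "y - e < q" "q < y" using Rats_dense_in_real[of "y - e" y] e by auto
    obtain r where r: "r \<in> \<rat>" "y < r" "r < y + e" using Rats_dense_in_real[of y "y + e"] e by auto
    have "(q, r) \<in> I" using q r by (simp add: I_def)
    then have "TT q r \<in> G" by (force simp: G_def)
    then have "\<theta> \<in> TT q r" using th by blast
    then obtain x where x: "x \<in> F" "q < g \<theta> x" "g \<theta> x < r" by (auto simp: TT_def)
    have "proj_par (cos \<theta>, sin \<theta>) x \<in> proj_par (cos \<theta>, sin \<theta>) ` F" using x by blast
    moreover have "dist (proj_par (cos \<theta>, sin \<theta>) x) y < e"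
      using x q r unfolding proj_eq g_def dist_real_def by auto
    ultimately show "\<exists>z\<in>proj_par (cos \<theta>, sin \<theta>) ` F. dist z y < e" by blast
  qed
  then show ?thesis using uc by blast
qed
end
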